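(* Let $X$ be a compact metric space and $F\colon X\to 2^X$ a set-valued mapping with the specification property. Then the shift map $\sigma\colon\varprojlim F\to\varprojlim F$ has the specification property (as a single-valued continuous map on the compact metric space $\varprojlim F$).
   Context: $d$ is the metric on $X$; $2^X$ is the space of nonempty closed subsets of $X$; a set-valued mapping is an upper semicontinuous $F\colon X\to 2^X$. An orbit of $x$ under $F$ is a sequence $(x_j)_{j=0}^\infty$ with $x_0=x$, $x_{j+1}\in F(x_j)$. The inverse limit is $\varprojlim F=\{(x_0,x_1,x_2,\dots)\in X^{\mathbb{N}}: x_i\in F(x_{i+1})\text{ for all } i\}$, a subspace of the product $X^{\mathbb{N}}$ (with any compatible metric, e.g. $\sum_i 2^{-i}\min(1,d(x_i,y_i))$), and $\sigma(x_0,x_1,\dots)=(x_1,x_2,\dots)$. A set-valued $F$ has the specification property if for every $\epsilon>0$ there is $M\in\mathbb{N}$ such that for any $n$, any $x^1,\dots,x^n\in X$, any integers $0\le a_1\le b_1<a_2\le\dots<a_n\le b_n$ with $a_{i+1}-b_i>M$, any orbits $(x^i_j)_{j=0}^\infty$ of the $x^i$, and any $P>M+b_n-a_1$, there is $z\in X$ with an orbit $(z_j)_{j=0}^\infty$ with $d(z_j,x^i_j)<\epsilon$ for $1\le i\le n$, $a_i\le j\le b_i$, and $z_P=z$. For a single-valued continuous map $\sigma$ this means (orbits being unique): for every $\epsilon>0$ there is $M$ such that for any points $x^1,\dots,x^n$, any such $a_i,b_i$ with $a_{i+1}-b_i>M$, and any $P>M+b_n-a_1$, there is $z$ with $d(\sigma^j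 z,\sigma^j x^i)<\epsilon$ for $a_i\le j\le b_i$ and $\sigma^P z=z$. *)

theory Defs
  imports "HOL-Analysis.Analysis"
begin

definition usc_setvalued :: "'a::metric_space set \<Rightarrow> ('a \<Rightarrow> 'a set) \<Rightarrow> bool" where
  "usc_setvalued X F \<longleftrightarrow>
     (\<forall>x\<in>X. F x \<noteq> {} \<and> F x \<subseteq> X \<and> closed (F x)) \<and>
     (\<forall>x\<in>X. \<forall>U. open U \<and> F x \<subseteq> U \<longrightarrow>
        (\<exists>V. open V \<and> x \<in> V \<and> (\<forall>y\<in>X \<inter> V. F y \<subseteq> U)))"

definition is_orbit :: "('a \<Rightarrow> 'a set) \<Rightarrow> 'a \<Rightarrow> (nat \<Rightarrow> 'a) \<Rightarrow> bool" where
  "is_orbit F x s \<longleftrightarrow> s 0 = x \<and> (\<forall>j. s (Suc j) \<in> F (s j))"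

definition setvalued_spec :: "'a::metric_space set \<Rightarrow> ('a \<Rightarrow> 'a set) \<Rightarrow> bool" where
  "setvalued_spec X F \<longleftrightarrow>
     (\<forall>\<epsilon>>0. \<exists>M::nat. \<forall>(n::nat) (a::nat\<Rightarrow>nat) (b::nat\<Rightarrow>nat) (orb::nat\<Rightarrow>nat\<Rightarrow>'a) (P::nat).
        n \<ge> 1 \<and>
        (\<forall>i\<in>{1..n}. orb i 0 \<in> X \<and> is_orbit F (orb i 0) (orb i)) \<and>
        (\<forall>i\<in>{1..n}. a i \<le> b i) \<and>
        (\<forall>i\<in>{1..<n}. a (Suc i) > b i + M) \<and>
        P > M + (b n - a 1)
        \<longrightarrow> (\<exists>z\<in>X. \<exists>zs. is_orbit F z zs \<and>
               (\<forall>i\<in>{1..n}. \<forall>j\<in>{a i..b i}. dist (zs j) (orb i j) < \<epsilon>) \<and>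
               zs P = z))"

definition map_spec :: "'b set \<Rightarrow> ('b \<Rightarrow> 'b \<Rightarrow> real) \<Rightarrow> ('b \<Rightarrow> 'b) \<Rightarrow> bool" where
  "map_spec Y d f \<longleftrightarrow>
     (\<forall>\<epsilon>>0. \<exists>M::nat. \<forall>(n::nat) (a::nat\<Rightarrow>nat) (b::nat\<Rightarrow>nat) (pts::nat\<Rightarrow>'b) (P::nat).
        n \<ge> 1 \<and>
        (\<forall>i\<in>{1..n}. pts i \<in> Y) \<and>
        (\<forall>i\<in>{1..n}. a i \<le> b i) \<and>
        (\<forall>i\<in>{1..<n}. a (Suc i) > b i + M) \<and>
        P > M + (b n - a 1)
        \<longrightarrow> (\<exists>z\<in>Y.
               (\<forall>i\<in>{1..n}. \<forall>j\<in>{a i..b i}. d ((f ^^ j) z) ((f ^^ j) (pts i)) < \<epsilon>) \<and>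
               (f ^^ P) z = z))"

definition invlim :: "'a set \<Rightarrow> ('a \<Rightarrow> 'a set) \<Rightarrow> (nat \<Rightarrow> 'a) set" where
  "invlim X F = {x. (\<forall>i. x i \<in> X) \<and> (\<forall>i. x i \<in> F (x (Suc i)))}"

definition invlim_dist :: "(nat \<Rightarrow> 'a::metric_space) \<Rightarrow> (nat \<Rightarrow> 'a) \<Rightarrow> real" where
  "invlim_dist x y = (\<Sum>i. (1/2)^i * min 1 (dist (x i) (y i)))"

definition shift :: "(nat \<Rightarrow> 'a) \<Rightarrow> (nat \<Rightarrow> 'a)" where
  "shift x = (\<lambda>i. x (Suc i))"

end

theory Submission imports Defs begin

lemma geo_sum: "(\<Sum>i. (1/2::real)^i) = 2" using suminf_geometric[of "1/2::real"] by simp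
lemma geo_summ: "summable (\<lambda>i. (1/2::real)^i)" using summable_geometric[of "1/2::real"] by simp

lemma invlim_dist_bound:
  fixes x y :: "nat \<Rightarrow> 'a::metric_space"
  assumes d: "\<And>k. k \<le> K \<Longrightarrow> dist (x k) (y k) < e"
    and K: "(1/2::real)^K < \<epsilon>/2" and e: "e \<le> \<epsilon>/4" "e > 0"
  shows "invlim_dist x y < \<epsilon>"
proof -
  let ?f = "\<lambda>i. (1/2::real)^i * min 1 (dist (x i) (y i))"
  have le: "\<And>i. ?f i \<le> (1/2)^i" by (simp add: mult_left_le)
  have nn: "\<And>i. 0 \<le> ?f i" by simp
  have sf: "summable ?f"
    by (rule summable_comparison_test'[OF geo_summ, of 0]) (use le nn in auto)
  have split: "suminf ?f = (\<Sum>i. ?f (i + Suc K)) + sum ?f {..<Suc K}"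
    using suminf_split_initial_segment[OF sf] by blast
  have s2: "summable (\<lambda>i. ?f (i + Suc K))" using sf by (subst summable_iff_shift)
  have g2: "summable (\<lambda>i. (1/2::real)^(i + Suc K))" using geo_summ by (subst summable_iff_shift)
  have "(\<Sum>i. ?f (i + Suc K)) \<le> (\<Sum>i. (1/2::real)^(i + Suc K))"
    by (rule suminf_le[OF _ s2 g2]) (rule le)
  also have "\<dots> = (\<Sum>i. (1/2::real)^(Suc K) * (1/2)^i)" by (simp add: power_add mult.commute)
  also have "\<dots> = (1/2)^(Suc K) * 2" using suminf_mult[OF geo_summ, of "(1/2::real)^Suc K"] geo_sum by simp
  also have "\<dots> = (1/2)^K" by simp
  finally have t: "(\<Sum>i. ?f (i + Suc K)) \<le> (1/2)^K" .
  have "sum ?f {..<Suc K} \<le> sum (\<lambda>i. e * (1/2::real)^i) {..<Suc K}"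
  proof (rule sum_mono)
    fix i assume "i \<in> {..<Suc K}"
    then have "dist (x i) (y i) < e" using d by auto
    then have "min 1 (dist (x i) (y i)) \<le> e" by simp
    then show "?f i \<le> e * (1/2)^i" by (simp add: mult.commute mult_left_mono)
  qed
  also have "\<dots> = e * sum (\<lambda>i. (1/2::real)^i) {..<Suc K}" by (rule sum_distrib_left[symmetric])
  also have "\<dots> \<le> e * 2"
    using sum_le_suminf[OF geo_summ, of "{..<Suc K}"] geo_sum e by (intro mult_left_mono) auto
  finally have h: "sum ?f {..<Suc K} \<le> e * 2" .
  show ?thesis unfolding invlim_dist_def using split t h K e by linarith
qed

primrec ext :: "('a \<Rightarrow> 'a set) \<Rightarrow> 'a \<Rightarrow> nat \<Rightarrow> 'a" where
  "ext F x 0 = x"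
| "ext F x (Suc j) = (SOME y. y \<in> F (ext F x j))"

lemma ext_props:
  assumes u: "usc_setvalued X F" and x: "x \<in> X"
  shows "ext F x j \<in> X \<and> ext F x (Suc j) \<in> F (ext F x j)"
proof (induction j)
  case 0
  have "F x \<noteq> {}" using u x unfolding usc_setvalued_def by blast
  then show ?case using x by (simp add: some_in_eq)
next
  case (Suc j)
  have "F (ext F x j) \<subseteq> X" using u Suc unfolding usc_setvalued_def by blast
  then have X1: "ext F x (Suc j) \<in> X" using Suc by blast
  have "F (ext F x (Suc j)) \<noteq> {}" using u X1 unfolding usc_setvalued_def by blast
  then show ?case using X1 by (simp only: ext.simps(2)[of F x "Suc j"]) (simp add: some_in_eq)
qed

lemma mono_ab:
  fixes a b :: "nat \<Rightarrow> nat"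
  assumes ab: "\<forall>i\<in>{1..n}. a i \<le> b i" and gap: "\<forall>i\<in>{1..<n}. a (Suc i) > b i + M"
    and i: "1 \<le> i" "i \<le> k" "k \<le> n"
  shows "a i \<le> a k \<and> b i \<le> b k"
  using i(2,3)
proof (induction k)
  case 0 then show ?case using i by simp
next
  case (Suc k)
  show ?case
  proof (cases "i = Suc k")
    case True then show ?thesis by simp
  next
    case False
    then have ik: "i \<le> k" using Suc by simp
    then have IH: "a i \<le> a k \<and> b i \<le> b k" using Suc by simp
    have "a (Suc k) > b k + M" using gap ik i Suc by auto
    moreover have "a k \<le> b k" "a (Suc k) \<le> b (Suc k)" using ab ik i Suc by auto
    ultimately show ?thesis using IH by linarith
  qed
qed

lemma shift_pow: "(shift ^^ j) x = (\<lambda>k. x (k + j))"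
  by (induction j) (auto simp: shift_def)

lemma orbit_in_X:
  assumes u: "usc_setvalued X F" and z: "z \<in> X" and o: "is_orbit F z zs"
  shows "zs j \<in> X"
proof (induction j)
  case 0 then show ?case using z o by (simp add: is_orbit_def)
next
  case (Suc j)
  have "F (zs j) \<subseteq> X" using u Suc unfolding usc_setvalued_def by blast
  then show ?case using o unfolding is_orbit_def by blast
qed

lemma periodic_step:
  assumes o: "is_orbit F z zs" and P: "zs P = z" "P > 0"
  shows "zs (Suc u mod P) \<in> F (zs (u mod P))"
proof (cases "Suc (u mod P) = P")
  case True
  then have "Suc u mod P = 0" by (simp add: mod_Suc)
  moreover have "zs P \<in> F (zs (u mod P))" using o True unfolding is_orbit_def by metis
  ultimately show ?thesis using o P unfolding is_orbit_def by simp
next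
  case False
  then have "Suc u mod P = Suc (u mod P)" by (simp add: mod_Suc)
  then show ?thesis using o unfolding is_orbit_def by simp
qed


theorem theorem7:
  fixes X :: "'a::metric_space set" and F :: "'a \<Rightarrow> 'a set"
  assumes "compact X"
    and "usc_setvalued X F"
    and "setvalued_spec X F"
  shows "map_spec (invlim X F) invlim_dist shift"
  unfolding map_spec_def
proof (intro allI impI)
  fix \<epsilon> :: real assume ep: "\<epsilon> > 0"
  have u: "usc_setvalued X F" by fact
  obtain K where K: "(1/2::real)^K < \<epsilon>/2" using real_arch_pow_inv[of "\<epsilon>/2" "1/2::real"] ep by auto
  have e4: "\<epsilon>/4 > 0" using ep by simp
  obtain MF :: nat where MF: "\<forall>(n::nat) (a::nat\<Rightarrow>nat) (b::nat\<Rightarrow>nat) (orb::nat\<Rightarrow>nat\<Rightarrow>'a) (P::nat).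
        n \<ge> 1 \<and>
        (\<forall>i\<in>{1..n}. orb i 0 \<in> X \<and> is_orbit F (orb i 0) (orb i)) \<and>
        (\<forall>i\<in>{1..n}. a i \<le> b i) \<and>
        (\<forall>i\<in>{1..<n}. a (Suc i) > b i + MF) \<and>
        P > MF + (b n - a 1)
        \<longrightarrow> (\<exists>z\<in>X. \<exists>zs. is_orbit F z zs \<and>
               (\<forall>i\<in>{1..n}. \<forall>j\<in>{a i..b i}. dist (zs j) (orb i j) < \<epsilon>/4) \<and>
               zs P = z)"
    using assms(3) e4 unfolding setvalued_spec_def by blast
  show "\<exists>M::nat. \<forall>(n::nat) (a::nat\<Rightarrow>nat) (b::nat\<Rightarrow>nat) (pts::nat\<Rightarrow>nat\<Rightarrow>'a) (P::nat).
        n \<ge> 1 \<and>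
        (\<forall>i\<in>{1..n}. pts i \<in> invlim X F) \<and>
        (\<forall>i\<in>{1..n}. a i \<le> b i) \<and>
        (\<forall>i\<in>{1..<n}. a (Suc i) > b i + M) \<and>
        P > M + (b n - a 1)
        \<longrightarrow> (\<exists>z\<in>invlim X F.
               (\<forall>i\<in>{1..n}. \<forall>j\<in>{a i..b i}. invlim_dist ((shift ^^ j) z) ((shift ^^ j) (pts i)) < \<epsilon>) \<and>
               (shift ^^ P) z = z)"
  proof (intro exI[of _ "MF + K"] allI impI, elim conjE)
    fix n :: nat and a b :: "nat \<Rightarrow> nat" and pts :: "nat \<Rightarrow> nat \<Rightarrow> 'a" and P :: nat
    assume n1: "n \<ge> 1" and pts: "\<forall>i\<in>{1..n}. pts i \<in> invlim X F"
      and ab: "\<forall>i\<in>{1..n}. a i \<le> b i" and gap: "\<forall>i\<in>{1..<n}. a (Suc i) > b i + (MF + K)"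
      and PP: "P > MF + K + (b n - a 1)"
    have mono: "\<And>i k. 1 \<le> i \<Longrightarrow> i \<le> k \<Longrightarrow> k \<le> n \<Longrightarrow> a i \<le> a k \<and> b i \<le> b k"
      using mono_ab[OF ab gap] by blast
    have a1bn: "a 1 \<le> b n" using mono[of 1 n] n1 ab by force
    define T where "T = b n + K"
    define orb where "orb = (\<lambda>i' t. if t \<le> T then pts (n+1-i') (T - t) else ext F (pts (n+1-i') 0) (t - T))"
    define a' where "a' = (\<lambda>i'. T - b (n+1-i') - K)"
    define b' where "b' = (\<lambda>i'. T - a (n+1-i'))"
    have ptsX: "\<And>i m. i \<in> {1..n} \<Longrightarrow> pts i m \<in> X \<and> pts i m \<in> F (pts i (Suc m))"
      using pts unfolding invlim_def by blast
    have c1: "\<forall>i\<in>{1..n}. orb i 0 \<in> X \<and> is_orbit F (orb i 0) (orb i)"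
    proof
      fix i' assume i': "i' \<in> {1..n}"
      define p where "p = n+1-i'"
      have p: "p \<in> {1..n}" using i' unfolding p_def by auto
      have o1: "\<And>t. t \<le> T \<Longrightarrow> orb i' t = pts p (T - t)" unfolding orb_def p_def by simp
      have o2: "\<And>t. t \<ge> T \<Longrightarrow> orb i' t = ext F (pts p 0) (t - T)" unfolding orb_def p_def by auto
      have "orb i' (Suc t) \<in> F (orb i' t)" for t
      proof (cases "Suc t \<le> T")
        case True
        then have "T - t = Suc (T - Suc t)" by simp
        then show ?thesis using o1[of t] o1[of "Suc t"] True ptsX[OF p, of "T - Suc t"] by simp
      next
        case False
        then have "Suc t - T = Suc (t - T)" by simp
        then show ?thesis using o2[of t] o2[of "Suc t"] False ext_props[OF u, of "pts p 0" "t - T"] ptsX[OF p, of 0] by simp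
      qed
      then show "orb i' 0 \<in> X \<and> is_orbit F (orb i' 0) (orb i')"
        using o1[of 0] ptsX[OF p] unfolding is_orbit_def by simp
    qed
    have c2: "\<forall>i\<in>{1..n}. a' i \<le> b' i"
    proof
      fix i' assume i': "i' \<in> {1..n}"
      then have "n + 1 - i' \<in> {1..n}" by auto
      then have "a (n+1-i') \<le> b (n+1-i')" using ab by blast
      then show "a' i' \<le> b' i'" unfolding a'_def b'_def by linarith
    qed
    have c3: "\<forall>i\<in>{1..<n}. a' (Suc i) > b' i + MF"
    proof
      fix i' assume i': "i' \<in> {1..<n}"
      define p where "p = n - i'"
      have p: "p \<in> {1..<n}" "n + 1 - Suc i' = p" "n + 1 - i' = Suc p" using i' unfolding p_def by auto
      have g: "a (Suc p) > b p + (MF + K)" using gap p by blast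
      have "b (Suc p) \<le> b n" using mono[of "Suc p" n] p by auto
      moreover have "a (Suc p) \<le> b (Suc p)" using ab p by auto
      ultimately show "a' (Suc i') > b' i' + MF" unfolding a'_def b'_def p(2,3) T_def using g by linarith
    qed
    have c4: "P > MF + (b' n - a' 1)"
      unfolding a'_def b'_def T_def using PP a1bn n1 by simp
    obtain z zs where zX: "z \<in> X" and zo: "is_orbit F z zs"
      and zc: "\<forall>i\<in>{1..n}. \<forall>j\<in>{a' i..b' i}. dist (zs j) (orb i j) < \<epsilon>/4" and zP: "zs P = z"
      using MF[rule_format, where n=n and a=a' and b=b' and orb=orb and P=P] n1 c1 c2 c3 c4 by blast
    have P0: "P > 0" using PP by simp
    obtain Q where Q: "P = Suc Q" using P0 not0_implies_Suc by blast
    define w where "w = (\<lambda>m. zs ((T + (P - 1) * m) mod P))"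
    have w_in: "w \<in> invlim X F"
      unfolding invlim_def
    proof (intro CollectI conjI allI)
      fix m show "w m \<in> X" unfolding w_def by (rule orbit_in_X[OF u zX zo])
    next
      fix m
      have "Suc (T + (P - 1) * Suc m) = T + (P - 1) * m + P" unfolding Q by simp
      then have "Suc (T + (P - 1) * Suc m) mod P = (T + (P - 1) * m) mod P" by (metis mod_add_self2)
      then show "w m \<in> F (w (Suc m))" unfolding w_def using periodic_step[OF zo zP P0, of "T + (P - 1) * Suc m"] by simp
    qed
    have per: "(shift ^^ P) w = w"
    proof
      fix k
      have "T + (P - 1) * (k + P) = T + (P - 1) * k + P * (P - 1)" unfolding Q by (simp add: algebra_simps)
      then have "(T + (P - 1) * (k + P)) mod P = (T + (P - 1) * k) mod P" by (metis mod_mult_self1 mod_mult_self2 mult.commute)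
      then show "(shift ^^ P) w k = w k" unfolding shift_pow w_def by simp
    qed
    have close: "\<forall>i\<in>{1..n}. \<forall>j\<in>{a i..b i}. invlim_dist ((shift ^^ j) w) ((shift ^^ j) (pts i)) < \<epsilon>"
    proof (intro ballI)
      fix i j assume i: "i \<in> {1..n}" and j: "j \<in> {a i..b i}"
      have "dist (w (k + j)) (pts i (k + j)) < \<epsilon>/4" if k: "k \<le> K" for k
      proof -
        define m where "m = k + j"
        define i' where "i' = n + 1 - i"
        have i': "i' \<in> {1..n}" "n + 1 - i' = i" using i unfolding i'_def by auto
        have bi: "b i \<le> b n" "a 1 \<le> a i" using mono[of i n] mono[of 1 i] i by auto
        have mT: "m \<le> T" unfolding m_def T_def using j k bi by auto
        have tP: "T - m < P" unfolding T_def m_def using PP j bi by auto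
        have tr: "T - m \<in> {a' i'..b' i'}" unfolding a'_def b'_def i'(2) m_def T_def using j k bi by auto
        have d: "dist (zs (T - m)) (orb i' (T - m)) < \<epsilon>/4" using zc i'(1) tr by blast
        have "orb i' (T - m) = pts i m" unfolding orb_def i'(2) using mT by simp
        moreover have "w m = zs (T - m)"
        proof -
          have "T + (P - 1) * m = (T - m) + P * m" using mT unfolding Q by simp
          then have "(T + (P - 1) * m) mod P = T - m" using tP by simp
          then show ?thesis unfolding w_def by simp
        qed
        ultimately show ?thesis using d unfolding m_def by simp
      qed
      then show "invlim_dist ((shift ^^ j) w) ((shift ^^ j) (pts i)) < \<epsilon>"
        unfolding shift_pow using invlim_dist_bound[of K "\<lambda>k. w (k + j)" "\<lambda>k. pts i (k + j)" "\<epsilon>/4" \<epsilon>] K ep by simp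
    qed
    show "\<exists>z\<in>invlim X F. (\<forall>i\<in>{1..n}. \<forall>j\<in>{a i..b i}. invlim_dist ((shift ^^ j) z) ((shift ^^ j) (pts i)) < \<epsilon>) \<and> (shift ^^ P) z = z"
      using w_in close per by blast
  qed
qed

end
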